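(* Let $\mathbf{L}=(L,\le)$ be a finite lattice with more than two elements and let $(R,\vee,\circ)$ be a subsemiring of $(\mathrm{Res}_1(\mathbf{L}),\vee,\circ)$ such that $f_{a,0}\in R$ for all $a\in L\setminus\{1\}$, every $f\in R$ satisfies $f_{a,0}\le f$ for some $a\in L\setminus\{1\}$, and for all $a\in L\setminus\{0,1\}$, $b\in L$ there exists $f\in R$ with $f(a)=b$. Then $(R,\vee)$ has a neutral element if and only if $1$ is join-irreducible in $\mathbf{L}$. If this neutral element exists, it is right but not left absorbing in $(R,\vee,\circ)$.
   Context: $\mathrm{Res}_1(\mathbf{L})$ is the set of maps $f:L\to L$ preserving binary joins with $f(0)=0$ and $f(1)=1$, a semiring under pointwise join and composition, ordered pointwise. $f_{a,b}(x)=b$ if $x\le a$ and $1$ otherwise. $1$ is join-irreducible if $1\ne a\vee b$ for all $a,b\in L\setminus\{1\}$. An element $r$ is right absorbing if $s\circ r=r$ for all $s\in R$, left absorbing if $r\circ s=r$ for all $s\in R$. *)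

theory Defs
  imports Main
begin

definition Res1 :: "('a::bounded_lattice \<Rightarrow> 'a) set" where
  "Res1 = {f. (\<forall>x y. f (sup x y) = sup (f x) (f y)) \<and> f bot = bot \<and> f top = top}"

definition subsemiring_Res1 :: "('a::bounded_lattice \<Rightarrow> 'a) set \<Rightarrow> bool" where
  "subsemiring_Res1 R \<longleftrightarrow> R \<subseteq> Res1 \<and> R \<noteq> {} \<and>
     (\<forall>f\<in>R. \<forall>g\<in>R. (\<lambda>x. sup (f x) (g x)) \<in> R) \<and>
     (\<forall>f\<in>R. \<forall>g\<in>R. f \<circ> g \<in> R)"

definition fab :: "'a::bounded_lattice \<Rightarrow> 'a \<Rightarrow> 'a \<Rightarrow> 'a" where
  "fab a b = (\<lambda>x. if x \<le> a then b else top)"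

definition top_join_irreducible :: "'a::bounded_lattice itself \<Rightarrow> bool" where
  "top_join_irreducible _ \<longleftrightarrow> (\<forall>a b::'a. a \<noteq> top \<longrightarrow> b \<noteq> top \<longrightarrow> sup a b \<noteq> top)"

definition join_neutral :: "('a::bounded_lattice \<Rightarrow> 'a) set \<Rightarrow> ('a \<Rightarrow> 'a) \<Rightarrow> bool" where
  "join_neutral R e \<longleftrightarrow> e \<in> R \<and> (\<forall>f\<in>R. (\<lambda>x. sup (e x) (f x)) = f)"

definition right_absorbing :: "('a \<Rightarrow> 'a) set \<Rightarrow> ('a \<Rightarrow> 'a) \<Rightarrow> bool" where
  "right_absorbing R r \<longleftrightarrow> (\<forall>s\<in>R. s \<circ> r = r)"

definition left_absorbing :: "('a \<Rightarrow> 'a) set \<Rightarrow> ('a \<Rightarrow> 'a) \<Rightarrow> bool" where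
  "left_absorbing R r \<longleftrightarrow> (\<forall>s\<in>R. r \<circ> s = r)"

end

theory Submission
  imports Defs
begin

lemma exists_mid:
  assumes "card (UNIV :: 'a::{finite, bounded_lattice} set) > 2"
  shows "\<exists>a::'a. a \<noteq> bot \<and> a \<noteq> top"
proof (rule ccontr)
  assume "\<not> ?thesis"
  then have "(UNIV::'a set) \<subseteq> {bot, top}" by blast
  then have "card (UNIV::'a set) \<le> card {bot, top::'a}" by (simp add: card_mono)
  also have "\<dots> \<le> 2" by (simp add: card_insert_le_m1)
  finally show False using assms by simp
qed

lemma Res1_props:
  assumes "f \<in> Res1"
  shows "f bot = bot" "f top = top" "f (sup x y) = sup (f x) (f y)"
  using assms unfolding Res1_def by auto

theorem proposition7p1:
  fixes R :: "('a::{finite, bounded_lattice} \<Rightarrow> 'a) set"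
  assumes "card (UNIV :: 'a set) > 2"
    and "subsemiring_Res1 R"
    and "\<forall>a. a \<noteq> top \<longrightarrow> fab a bot \<in> R"
    and "\<forall>f\<in>R. \<exists>a. a \<noteq> top \<and> fab a bot \<le> f"
    and "\<forall>a b. a \<noteq> bot \<and> a \<noteq> top \<longrightarrow> (\<exists>f\<in>R. f a = b)"
  shows "((\<exists>e. join_neutral R e) \<longleftrightarrow> top_join_irreducible TYPE('a)) \<and>
         (\<forall>e. join_neutral R e \<longrightarrow> right_absorbing R e \<and> \<not> left_absorbing R e)"
proof -
  obtain a0 :: 'a where a0: "a0 \<noteq> bot" "a0 \<noteq> top" using exists_mid[OF assms(1)] by blast
  have bt: "(bot::'a) \<noteq> top" using a0 by (metis top_le bot.extremum)
  have RR: "f \<in> Res1" if "f \<in> R" for f using assms(2) that unfolding subsemiring_Res1_def by blast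
  have eform: "e x = (if x = top then top else bot)" if "join_neutral R e" for e and x :: 'a
  proof (cases "x = top")
    case True
    then show ?thesis using that RR Res1_props(2) unfolding join_neutral_def by auto
  next
    case False
    have "fab x bot \<in> R" using assms(3) False by blast
    then have "sup (e x) (fab x bot x) = fab x bot x"
      using that unfolding join_neutral_def by (metis (no_types, lifting))
    then show ?thesis using False by (simp add: fab_def)
  qed
  have part1: "(\<exists>e. join_neutral R e) \<longleftrightarrow> top_join_irreducible TYPE('a)"
  proof
    assume "\<exists>e. join_neutral R e"
    then obtain e where e: "join_neutral R e" by blast
    then have eR: "e \<in> Res1" using RR unfolding join_neutral_def by blast
    show "top_join_irreducible TYPE('a)"
      unfolding top_join_irreducible_def
    proof (intro allI impI)
      fix a b :: 'a assume "a \<noteq> top" "b \<noteq> top"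
      show "sup a b \<noteq> top"
      proof
        assume h: "sup a b = top"
        have "e (sup a b) = sup (e a) (e b)" using Res1_props(3)[OF eR] .
        then show False using h eform[OF e] \<open>a \<noteq> top\<close> \<open>b \<noteq> top\<close> bt by simp
      qed
    qed
  next
    assume irr: "top_join_irreducible TYPE('a)"
    obtain m where m: "m \<in> {x::'a. x \<noteq> top}" "\<forall>b\<in>{x::'a. x \<noteq> top}. m \<le> b \<longrightarrow> m = b"
      using finite_has_maximal[of "{x::'a. x \<noteq> top}"] bt by auto
    have le: "x \<le> m \<longleftrightarrow> x \<noteq> top" for x
    proof
      assume "x \<le> m" then show "x \<noteq> top" using m(1) top_le by auto
    next
      assume "x \<noteq> top"
      then have "sup x m \<noteq> top" using irr m(1) unfolding top_join_irreducible_def by blast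
      then have "m = sup x m" using m(2) by auto
      then show "x \<le> m" by (metis sup.cobounded1)
    qed
    define e where "e = fab m (bot::'a)"
    have e_eq: "e x = (if x = top then top else bot)" for x
      unfolding e_def fab_def using le by simp
    have "e \<in> R" using assms(3) m(1) unfolding e_def by simp
    moreover have "(\<lambda>x. sup (e x) (f x)) = f" if "f \<in> R" for f
      using Res1_props(2)[OF RR[OF that]] by (auto simp: e_eq)
    ultimately show "\<exists>e. join_neutral R e" unfolding join_neutral_def by blast
  qed
  have part2: "right_absorbing R e \<and> \<not> left_absorbing R e" if e: "join_neutral R e" for e
  proof
    show "right_absorbing R e" unfolding right_absorbing_def
    proof
      fix s assume "s \<in> R"
      then show "s \<circ> e = e" using Res1_props(1,2)[OF RR] by (auto simp: eform[OF e])
    qed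
  next
    obtain s where s: "s \<in> R" "s a0 = top" using assms(5) a0 by blast
    have "(e \<circ> s) a0 \<noteq> e a0" using s a0 bt by (simp add: eform[OF e])
    then show "\<not> left_absorbing R e" unfolding left_absorbing_def using s by metis
  qed
  show ?thesis using part1 part2 by blast
qed

end
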